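(* Let $T=\{0,\dots,N\}$ and $\mathbb{F}$ a field. Let $C_\bullet$, $C'_\bullet$ be filtrations of finite-dimensional chain complexes $C$, $C'$ over $\mathbb{F}$ with filtration compatible ordered bases $\mathfrak{C}$, $\mathfrak{C}'$ (each of size $n$) and filtration boundary matrices $D$, $D'$. Let $\varphi_\bullet\colon C_\bullet\to C'_\bullet$ be an injective morphism of filtrations of chain complexes with $\varphi=\varphi_N$ an isomorphism, $F$ its matrix with respect to $\mathfrak{C},\mathfrak{C}'$, and $D^{\varphi}=DF^{-1}=F^{-1}D'$. Let $V'$ and $V^{\varphi}$ be invertible upper-triangular matrices such that $R'=D'V'$ and $R^{\varphi}=D^{\varphi}V^{\varphi}$ are reduced. Then for every index $j$, the column $r^{\varphi}_j$ is zero if and only if the column $r'_j$ is zero.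
   Context: A chain complex is a finite-dimensional graded vector space with differential $\partial$ of degree $-1$, $\partial^2=0$; a filtration of chain complexes is a chain of subcomplexes $C_0\subseteq\dots\subseteq C_N=C$. A basis $\mathfrak{M}$ of $M_N$ is filtration compatible if $\mathfrak{M}\cap M_t$ is a basis of $M_t$ for all $t$; an ordered such basis is a filtration compatible ordered basis if $m\le m'$ implies $\{t\mid m'\in M_t\}\subseteq\{t\mid m\in M_t\}$. The filtration boundary matrix is the matrix of $\partial$ in that basis. For a matrix $X$, $x_j$ is its $j$-th column; for a nonzero column, its pivot is the largest row index of a nonzero entry; $X$ is reduced if no two nonzero columns have the same pivot. *)

theory Defs
  imports "Jordan_Normal_Form.Matrix"
begin

text \<open>Pivot of a column: largest row index of a nonzero entry (meaningful for nonzero columns).\<close>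
definition col_pivot :: "'a::zero mat \<Rightarrow> nat \<Rightarrow> nat" where
  "col_pivot X j = Max {i. i < dim_row X \<and> X $$ (i, j) \<noteq> 0}"

definition zero_col :: "'a::zero mat \<Rightarrow> nat \<Rightarrow> bool" where
  "zero_col X j \<longleftrightarrow> (\<forall>i < dim_row X. X $$ (i, j) = 0)"

definition reduced :: "'a::zero mat \<Rightarrow> bool" where
  "reduced X \<longleftrightarrow> (\<forall>j1 < dim_col X. \<forall>j2 < dim_col X.
      j1 \<noteq> j2 \<longrightarrow> \<not> zero_col X j1 \<longrightarrow> \<not> zero_col X j2 \<longrightarrow>
      col_pivot X j1 \<noteq> col_pivot X j2)"

text \<open>A filtration C_0 \<subseteq> ... \<subseteq> C_N = C of a chain complex with filtration compatible
  ordered basis of size n: C_t is spanned by the first k t basis vectors, k monotone,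
  k N = n, each C_t is a subcomplex, the basis is homogeneous (degree function deg) and the
  boundary matrix D has degree -1 and squares to zero.\<close>
definition filtered_complex ::
  "nat \<Rightarrow> nat \<Rightarrow> (nat \<Rightarrow> nat) \<Rightarrow> (nat \<Rightarrow> int) \<Rightarrow> 'a::field mat \<Rightarrow> bool" where
  "filtered_complex n N k deg D \<longleftrightarrow>
     D \<in> carrier_mat n n \<and> D * D = 0\<^sub>m n n \<and>
     (\<forall>i < n. \<forall>j < n. D $$ (i, j) \<noteq> 0 \<longrightarrow> deg i = deg j - 1) \<and>
     (\<forall>t t'. t \<le> t' \<longrightarrow> t' \<le> N \<longrightarrow> k t \<le> k t') \<and> k N = n \<and>
     (\<forall>t \<le> N. \<forall>i < n. \<forall>j < k t. D $$ (i, j) \<noteq> 0 \<longrightarrow> i < k t)"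

text \<open>F is the matrix (columns = images of basis vectors) of an injective morphism of
  filtrations of chain complexes: commutes with the differentials, preserves degrees,
  maps C_t into C'_t, and each restriction to C_t is injective.\<close>
definition injective_filtration_morphism ::
  "nat \<Rightarrow> nat \<Rightarrow> (nat \<Rightarrow> nat) \<Rightarrow> (nat \<Rightarrow> int) \<Rightarrow> 'a::field mat \<Rightarrow>
   (nat \<Rightarrow> nat) \<Rightarrow> (nat \<Rightarrow> int) \<Rightarrow> 'a mat \<Rightarrow> 'a mat \<Rightarrow> bool" where
  "injective_filtration_morphism n N k deg D k' deg' D' F \<longleftrightarrow>
     F \<in> carrier_mat n n \<and> F * D = D' * F \<and>
     (\<forall>i < n. \<forall>j < n. F $$ (i, j) \<noteq> 0 \<longrightarrow> deg' i = deg j) \<and>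
     (\<forall>t \<le> N. \<forall>i < n. \<forall>j < k t. F $$ (i, j) \<noteq> 0 \<longrightarrow> i < k' t) \<and>
     (\<forall>t \<le> N. \<forall>v \<in> carrier_vec n. (\<forall>i. k t \<le> i \<and> i < n \<longrightarrow> v $ i = 0) \<longrightarrow>
        F *\<^sub>v v = 0\<^sub>v n \<longrightarrow> v = 0\<^sub>v n)"

end

theory Submission
  imports Defs "Jordan_Normal_Form.Determinant"
begin

lemma mv_entry:
  assumes "A \<in> carrier_mat n n" "u \<in> carrier_vec n" "i < n"
  shows "(A *\<^sub>v u) $ i = (\<Sum>l\<in>{0..<n}. A $$ (i,l) * u $ l)"
  using assms by (simp add: scalar_prod_def)

lemma sum_single_nz:
  assumes "finite S" "a \<in> S" "\<And>x. x \<in> S \<Longrightarrow> x \<noteq> a \<Longrightarrow> f x = 0"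
  shows "sum f S = f a"
proof -
  have "sum f S = f a + sum f (S - {a})" using assms by (simp add: sum.remove)
  also have "sum f (S - {a}) = 0" using assms by (intro sum.neutral) auto
  finally show ?thesis by simp
qed

lemma pivot_facts:
  assumes "dim_row R = n" "\<not> zero_col R l"
  shows "col_pivot R l < n" "R $$ (col_pivot R l, l) \<noteq> 0"
    "\<And>i. col_pivot R l < i \<Longrightarrow> i < n \<Longrightarrow> R $$ (i, l) = 0"
proof -
  let ?S = "{i. i < dim_row R \<and> R $$ (i, l) \<noteq> 0}"
  have fin: "finite ?S" by simp
  have ne: "?S \<noteq> {}" using assms(2) unfolding zero_col_def by auto
  have "col_pivot R l \<in> ?S" unfolding col_pivot_def using Max_in[OF fin ne] .
  then show "col_pivot R l < n" "R $$ (col_pivot R l, l) \<noteq> 0" using assms(1) by auto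
  fix i assume "col_pivot R l < i" "i < n"
  show "R $$ (i, l) = 0"
  proof (rule ccontr)
    assume "R $$ (i, l) \<noteq> 0"
    then have "i \<in> ?S" using \<open>i < n\<close> assms(1) by auto
    then have "i \<le> col_pivot R l" unfolding col_pivot_def using Max_ge[OF fin] by blast
    then show False using \<open>col_pivot R l < i\<close> by simp
  qed
qed

lemma diag_nz:
  fixes V :: "'a::field mat"
  assumes V: "V \<in> carrier_mat n n" and ut: "upper_triangular V" and inv: "invertible_mat V"
    and j: "j < n"
  shows "V $$ (j,j) \<noteq> 0"
proof -
  obtain B where VB: "V * B = 1\<^sub>m n" and BV: "B * V = 1\<^sub>m (dim_row B)"
    using inv V unfolding invertible_mat_def inverts_mat_def by auto
  have B: "B \<in> carrier_mat n n"
  proof -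
    have "dim_col B = n" using arg_cong[OF VB, of dim_col] by simp
    moreover have "dim_row B = n"
      using arg_cong[OF BV, of dim_col] V by simp
    ultimately show ?thesis by auto
  qed
  have "det V * det B = 1" using det_mult[OF V B] VB by simp
  then have "det V \<noteq> 0" by auto
  then have "0 \<notin> set (diag_mat V)" using det_upper_triangular[OF ut V] by auto
  then show ?thesis using V j unfolding diag_mat_def by auto
qed

lemma tri_solve:
  fixes V :: "'a::field mat"
  assumes V: "V \<in> carrier_mat n n" and ut: "upper_triangular V"
    and dg: "\<And>i. i < n \<Longrightarrow> V $$ (i,i) \<noteq> 0"
    and u: "u \<in> carrier_vec n"
    and w: "\<And>i. j < i \<Longrightarrow> i < n \<Longrightarrow> (V *\<^sub>v u) $ i = 0"
  shows "\<And>i. j < i \<Longrightarrow> i < n \<Longrightarrow> u $ i = 0"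
proof (rule ccontr)
  fix i assume ji: "j < i" "i < n" "u $ i \<noteq> 0"
  let ?S = "{i. j < i \<and> i < n \<and> u $ i \<noteq> 0}"
  have fin: "finite ?S" by simp
  have ne: "?S \<noteq> {}" using ji by auto
  define M where "M = Max ?S"
  have M: "M \<in> ?S" unfolding M_def using Max_in[OF fin ne] .
  have Mge: "\<And>l. l \<in> ?S \<Longrightarrow> l \<le> M" unfolding M_def using Max_ge[OF fin] by auto
  have "(V *\<^sub>v u) $ M = (\<Sum>l\<in>{0..<n}. V $$ (M,l) * u $ l)" using mv_entry[OF V u] M by auto
  also have "\<dots> = V $$ (M,M) * u $ M"
  proof (rule sum_single_nz)
    show "M \<in> {0..<n}" using M by auto
    fix l assume l: "l \<in> {0..<n}" "l \<noteq> M"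
    show "V $$ (M, l) * u $ l = 0"
    proof (cases "l < M")
      case True
      then show ?thesis using ut V M unfolding upper_triangular_def by auto
    next
      case False
      then have "M < l" using l by auto
      then have "l \<notin> ?S" using Mge by force
      then show ?thesis using l M \<open>M < l\<close> by auto
    qed
  qed simp
  finally have "(V *\<^sub>v u) $ M = V $$ (M,M) * u $ M" .
  moreover have "V $$ (M,M) * u $ M \<noteq> 0" using dg M by auto
  ultimately show False using w M by auto
qed

lemma reduced_kernel:
  fixes R :: "'a::field mat"
  assumes R: "R \<in> carrier_mat n n" and red: "reduced R" and u: "u \<in> carrier_vec n"
    and Ru: "R *\<^sub>v u = 0\<^sub>v n" and uj: "u $ j \<noteq> 0" and j: "j < n"
    and uz: "\<And>i. j < i \<Longrightarrow> i < n \<Longrightarrow> u $ i = 0"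
  shows "zero_col R j"
proof (rule ccontr)
  assume nz: "\<not> zero_col R j"
  let ?S = "{l. l < n \<and> u $ l \<noteq> 0 \<and> \<not> zero_col R l}"
  have fin: "finite ?S" by simp
  have ne: "?S \<noteq> {}" using nz uj j by auto
  have "Max (col_pivot R ` ?S) \<in> col_pivot R ` ?S" using fin ne by (intro Max_in) auto
  then obtain ls where ls: "ls \<in> ?S" and lsM: "col_pivot R ls = Max (col_pivot R ` ?S)" by auto
  have lsge: "\<And>l. l \<in> ?S \<Longrightarrow> col_pivot R l \<le> col_pivot R ls"
    using lsM fin by (simp add: Max_ge)
  define p where "p = col_pivot R ls"
  have dr: "dim_row R = n" using R by auto
  have pn: "p < n" and Rp: "R $$ (p, ls) \<noteq> 0" using pivot_facts[OF dr] ls unfolding p_def by auto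
  have "(R *\<^sub>v u) $ p = (\<Sum>l\<in>{0..<n}. R $$ (p,l) * u $ l)" using mv_entry[OF R u pn] .
  also have "\<dots> = R $$ (p,ls) * u $ ls"
  proof (rule sum_single_nz)
    show "ls \<in> {0..<n}" using ls by auto
    fix l assume l: "l \<in> {0..<n}" "l \<noteq> ls"
    show "R $$ (p, l) * u $ l = 0"
    proof (cases "u $ l = 0")
      case False
      show ?thesis
      proof (cases "zero_col R l")
        case True
        then show ?thesis using pn dr unfolding zero_col_def by auto
      next
        case nzl: False
        then have lS: "l \<in> ?S" using l False by auto
        have "col_pivot R l \<noteq> col_pivot R ls"
          using red R l ls nzl unfolding reduced_def by auto
        with lsge[OF lS] have "col_pivot R l < p" unfolding p_def by auto
        then have "R $$ (p, l) = 0" using pivot_facts(3)[OF dr nzl] pn by auto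
        then show ?thesis by simp
      qed
    qed simp
  qed simp
  finally have "(R *\<^sub>v u) $ p = R $$ (p,ls) * u $ ls" .
  moreover have "R $$ (p,ls) * u $ ls \<noteq> 0" using Rp ls by auto
  ultimately show False using Ru pn by auto
qed

definition kz :: "'a::field mat \<Rightarrow> nat \<Rightarrow> nat \<Rightarrow> bool" where
  "kz A n j \<longleftrightarrow> (\<exists>w \<in> carrier_vec n. w $ j \<noteq> 0 \<and> (\<forall>i. j < i \<and> i < n \<longrightarrow> w $ i = 0)
      \<and> A *\<^sub>v w = 0\<^sub>v n)"

lemma red_iff:
  fixes A V :: "'a::field mat"
  assumes A: "A \<in> carrier_mat n n" and V: "V \<in> carrier_mat n n" and ut: "upper_triangular V"
    and inv: "invertible_mat V" and red: "reduced (A * V)" and j: "j < n"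
  shows "zero_col (A * V) j \<longleftrightarrow> kz A n j"
proof
  have dg: "\<And>i. i < n \<Longrightarrow> V $$ (i,i) \<noteq> 0" using diag_nz[OF V ut inv] .
  assume zc: "zero_col (A * V) j"
  have z: "\<And>i. i < n \<Longrightarrow> (A * V) $$ (i,j) = 0" using zc A unfolding zero_col_def by simp
  have "col (A * V) j = 0\<^sub>v n"
  proof (rule eq_vecI)
    show "dim_vec (col (A * V) j) = dim_vec (0\<^sub>v n)" using A by simp
    fix i assume "i < dim_vec (0\<^sub>v n)"
    then have i: "i < n" by simp
    have "col (A * V) j $ i = (A * V) $$ (i,j)" using A V i j by (intro index_col) auto
    then show "col (A * V) j $ i = 0\<^sub>v n $ i" using z[OF i] i by simp
  qed
  then have c1: "A *\<^sub>v col V j = 0\<^sub>v n" using col_mult2[OF A V j] by simp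
  have c2: "col V j $ j \<noteq> 0" using dg j V by simp
  have c3: "\<forall>i. j < i \<and> i < n \<longrightarrow> col V j $ i = 0"
  proof (intro allI impI)
    fix i assume i: "j < i \<and> i < n"
    have "V $$ (i,j) = 0" using upper_triangularD[OF ut] i V by auto
    then show "col V j $ i = 0" using i j V by simp
  qed
  have c4: "col V j \<in> carrier_vec n" using V by auto
  show "kz A n j" unfolding kz_def
    by (rule bexI[where x="col V j"], intro conjI, rule c2, rule c3, rule c1, rule c4)
next
  have dg: "\<And>i. i < n \<Longrightarrow> V $$ (i,i) \<noteq> 0" using diag_nz[OF V ut inv] .
  assume "kz A n j"
  then obtain w where w0: "w \<in> carrier_vec n" and
    w123: "w $ j \<noteq> 0 \<and> (\<forall>i. j < i \<and> i < n \<longrightarrow> w $ i = 0) \<and> A *\<^sub>v w = 0\<^sub>v n"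
    unfolding kz_def by (rule bexE)
  have w: "w \<in> carrier_vec n" "w $ j \<noteq> 0" "\<And>i. j < i \<Longrightarrow> i < n \<Longrightarrow> w $ i = 0"
    "A *\<^sub>v w = 0\<^sub>v n" using w0 w123 by simp_all
  obtain B where VB: "V * B = 1\<^sub>m n" and BV: "B * V = 1\<^sub>m (dim_row B)"
    using inv V unfolding invertible_mat_def inverts_mat_def by auto
  have B: "B \<in> carrier_mat n n"
  proof -
    have "dim_col B = n" using arg_cong[OF VB, of dim_col] by simp
    moreover have "dim_row B = n"
      using arg_cong[OF BV, of dim_col] V by simp
    ultimately show ?thesis by auto
  qed
  define u where "u = B *\<^sub>v w"
  have u: "u \<in> carrier_vec n" unfolding u_def by (rule mult_mat_vec_carrier[OF B w(1)])
  have "V *\<^sub>v u = (V * B) *\<^sub>v w" unfolding u_def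
    by (rule assoc_mult_mat_vec[symmetric, OF V B w(1)])
  also have "\<dots> = w" unfolding VB using w(1) by (rule one_mult_mat_vec)
  finally have Vu: "V *\<^sub>v u = w" .
  have "(A * V) *\<^sub>v u = A *\<^sub>v (V *\<^sub>v u)" by (rule assoc_mult_mat_vec[OF A V u])
  also have "\<dots> = 0\<^sub>v n" unfolding Vu by (rule w(4))
  finally have Ru: "(A * V) *\<^sub>v u = 0\<^sub>v n" .
  have wz: "\<And>i. j < i \<Longrightarrow> i < n \<Longrightarrow> (V *\<^sub>v u) $ i = 0" unfolding Vu by (rule w(3))
  have uz: "\<And>i. j < i \<Longrightarrow> i < n \<Longrightarrow> u $ i = 0"
    by (rule tri_solve[OF V ut dg u wz])
  have "w $ j = (\<Sum>l\<in>{0..<n}. V $$ (j,l) * u $ l)" using mv_entry[OF V u j] Vu by simp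
  also have "\<dots> = V $$ (j,j) * u $ j"
  proof (rule sum_single_nz)
    fix l assume l: "l \<in> {0..<n}" "l \<noteq> j"
    show "V $$ (j, l) * u $ l = 0"
    proof (cases "l < j")
      case True
      have "V $$ (j, l) = 0" using upper_triangularD[OF ut True] V j by simp
      then show ?thesis by simp
    next
      case False
      then show ?thesis using uz l by auto
    qed
  qed (use j in auto)
  finally have uj: "u $ j \<noteq> 0" using w(2) by auto
  have AV: "A * V \<in> carrier_mat n n" using A V by auto
  show "zero_col (A * V) j" using reduced_kernel[OF AV red u Ru uj j uz] .
qed

lemma mult_zero_vec_n:
  assumes "Q \<in> carrier_mat n n"
  shows "Q *\<^sub>v 0\<^sub>v n = (0\<^sub>v n :: 'a::field vec)"
  using assms by (intro eq_vecI) auto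

lemma kz_mult:
  fixes P Q A :: "'a::field mat"
  assumes P: "P \<in> carrier_mat n n" and Q: "Q \<in> carrier_mat n n" and QP: "Q * P = 1\<^sub>m n"
    and A: "A \<in> carrier_mat n n"
  shows "kz (P * A) n j \<longleftrightarrow> kz A n j"
proof -
  have key: "(P * A) *\<^sub>v w = 0\<^sub>v n \<longleftrightarrow> A *\<^sub>v w = 0\<^sub>v n" if w: "w \<in> carrier_vec n" for w
  proof
    assume h: "(P * A) *\<^sub>v w = 0\<^sub>v n"
    have Aw: "A *\<^sub>v w \<in> carrier_vec n" using A w by simp
    have e1: "A *\<^sub>v w = (Q * P) *\<^sub>v (A *\<^sub>v w)" unfolding QP using Aw by (rule one_mult_mat_vec[symmetric])
    have e2: "(Q * P) *\<^sub>v (A *\<^sub>v w) = Q *\<^sub>v (P *\<^sub>v (A *\<^sub>v w))" by (rule assoc_mult_mat_vec[OF Q P Aw])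
    have e3: "P *\<^sub>v (A *\<^sub>v w) = (P * A) *\<^sub>v w" by (rule assoc_mult_mat_vec[symmetric, OF P A w])
    show "A *\<^sub>v w = 0\<^sub>v n" using e1 e2 e3 h mult_zero_vec_n[OF Q] by metis
  next
    assume h: "A *\<^sub>v w = 0\<^sub>v n"
    have "(P * A) *\<^sub>v w = P *\<^sub>v (A *\<^sub>v w)" by (rule assoc_mult_mat_vec[OF P A w])
    then show "(P * A) *\<^sub>v w = 0\<^sub>v n" using h mult_zero_vec_n[OF P] by metis
  qed
  show ?thesis unfolding kz_def
  proof
    assume "\<exists>w\<in>carrier_vec n. w $ j \<noteq> 0 \<and> (\<forall>i. j < i \<and> i < n \<longrightarrow> w $ i = 0) \<and> P * A *\<^sub>v w = 0\<^sub>v n"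
    then obtain w where "w\<in>carrier_vec n" "w $ j \<noteq> 0" "(\<forall>i. j < i \<and> i < n \<longrightarrow> w $ i = 0)" "P * A *\<^sub>v w = 0\<^sub>v n" by blast
    then show "\<exists>w\<in>carrier_vec n. w $ j \<noteq> 0 \<and> (\<forall>i. j < i \<and> i < n \<longrightarrow> w $ i = 0) \<and> A *\<^sub>v w = 0\<^sub>v n"
      using key by blast
  next
    assume "\<exists>w\<in>carrier_vec n. w $ j \<noteq> 0 \<and> (\<forall>i. j < i \<and> i < n \<longrightarrow> w $ i = 0) \<and> A *\<^sub>v w = 0\<^sub>v n"
    then obtain w where "w\<in>carrier_vec n" "w $ j \<noteq> 0" "(\<forall>i. j < i \<and> i < n \<longrightarrow> w $ i = 0)" "A *\<^sub>v w = 0\<^sub>v n" by blast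
    then show "\<exists>w\<in>carrier_vec n. w $ j \<noteq> 0 \<and> (\<forall>i. j < i \<and> i < n \<longrightarrow> w $ i = 0) \<and> P * A *\<^sub>v w = 0\<^sub>v n"
      using key by blast
  qed
qed

theorem proposition3p10:
  fixes D D' F Finv V' Vphi :: "'a::field mat"
    and n N :: nat and k k' :: "nat \<Rightarrow> nat" and deg deg' :: "nat \<Rightarrow> int"
  assumes "filtered_complex n N k deg D"
    and "filtered_complex n N k' deg' D'"
    and "injective_filtration_morphism n N k deg D k' deg' D' F"
    and "Finv \<in> carrier_mat n n" and "F * Finv = 1\<^sub>m n" and "Finv * F = 1\<^sub>m n"
    and "V' \<in> carrier_mat n n" and "upper_triangular V'" and "invertible_mat V'"
    and "Vphi \<in> carrier_mat n n" and "upper_triangular Vphi" and "invertible_mat Vphi"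
    and "reduced (D' * V')"
    and "reduced ((D * Finv) * Vphi)"
  shows "\<forall>j < n. zero_col ((D * Finv) * Vphi) j \<longleftrightarrow> zero_col (D' * V') j"
proof (intro allI impI)
  fix j assume j: "j < n"
  have D: "D \<in> carrier_mat n n" using assms(1) unfolding filtered_complex_def by auto
  have D': "D' \<in> carrier_mat n n" using assms(2) unfolding filtered_complex_def by auto
  have F: "F \<in> carrier_mat n n" and FD: "F * D = D' * F"
    using assms(3) unfolding injective_filtration_morphism_def by auto
  note Fi = assms(4)
  have eq: "D * Finv = Finv * D'"
  proof -
    have e1: "Finv * F * D = D" unfolding assms(6) by (rule left_mult_one_mat[OF D])
    have e2: "Finv * F * D = Finv * (F * D)" by (rule assoc_mult_mat[OF Fi F D])
    have e3: "Finv * (D' * F) = Finv * D' * F" by (rule assoc_mult_mat[symmetric, OF Fi D' F])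
    have FDc: "Finv * D' \<in> carrier_mat n n" using Fi D' by (rule mult_carrier_mat)
    have e4: "Finv * D' * F * Finv = Finv * D' * (F * Finv)" by (rule assoc_mult_mat[OF FDc F Fi])
    have e5: "Finv * D' * 1\<^sub>m n = Finv * D'" by (rule right_mult_one_mat[OF FDc])
    have "D * Finv = Finv * D' * F * Finv" using e1 e2 e3 FD by metis
    also have "\<dots> = Finv * D'" using e4 e5 assms(5) by metis
    finally show ?thesis .
  qed
  have FD'c: "Finv * D' \<in> carrier_mat n n" using Fi D' by auto
  have r: "reduced ((Finv * D') * Vphi)" using assms(14) unfolding eq .
  have "zero_col ((D * Finv) * Vphi) j \<longleftrightarrow> kz (Finv * D') n j"
    unfolding eq by (rule red_iff[OF FD'c assms(10,11,12) r j])
  also have "\<dots> \<longleftrightarrow> kz D' n j" using kz_mult[OF Fi F assms(5) D'] .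
  also have "\<dots> \<longleftrightarrow> zero_col (D' * V') j"
    by (rule red_iff[OF D' assms(7,8,9,13) j, symmetric])
  finally show "zero_col ((D * Finv) * Vphi) j \<longleftrightarrow> zero_col (D' * V') j" .
qed

end
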